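(* Let $i\geq 1$. For $n\geq 0$, let $T(i,n)$ be the set of pairs $(L_1,L_2)$ of walks of length $n$ with steps $(1,1)$ and $(1,-1)$, where $L_1$ starts at $(0,0)$ and $L_2$ starts at $(0,2i)$, such that $(L_1,L_2)$ is converging, i.e., $L_1$ and $L_2$ share no common point before they reach a common ending point (at $x=n$). Let $T_i(t)=\sum_{n\geq 0}|T(i,n)|t^n$. Let $C(t)=\sum_{n\geq0}\frac{1}{n+1}\binom{2n}{n}t^n$ be the generating function of the Catalan numbers and $D(t)=tC^2(t)$. Then $T_i(t)=D^i(t)$. *)

theory Defs
  imports "HOL-Computational_Algebra.Formal_Power_Series"
begin

text \<open>A walk of length n with steps (1,1) and (1,-1) is encoded by its list of
  vertical steps (each 1 or -1).\<close>
definition step_lists :: "nat \<Rightarrow> int list set" where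
  "step_lists n = {s. length s = n \<and> set s \<subseteq> {1, -1}}"

definition walk_points :: "int \<times> int \<Rightarrow> int list \<Rightarrow> (int \<times> int) set" where
  "walk_points p s = {(fst p + int k, snd p + sum_list (take k s)) | k. k \<le> length s}"

definition walk_end :: "int \<times> int \<Rightarrow> int list \<Rightarrow> int \<times> int" where
  "walk_end p s = (fst p + int (length s), snd p + sum_list s)"

definition converging :: "int \<times> int \<Rightarrow> int list \<Rightarrow> int \<times> int \<Rightarrow> int list \<Rightarrow> bool" where
  "converging p1 s1 p2 s2 \<longleftrightarrow>
     walk_end p1 s1 = walk_end p2 s2 \<and>
     walk_points p1 s1 \<inter> walk_points p2 s2 = {walk_end p1 s1}"

definition T :: "nat \<Rightarrow> nat \<Rightarrow> (int list \<times> int list) set" where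
  "T i n = {(s1, s2). s1 \<in> step_lists n \<and> s2 \<in> step_lists n \<and>
                      converging (0, 0) s1 (0, 2 * int i) s2}"

definition T_gf :: "nat \<Rightarrow> rat fps" where
  "T_gf i = Abs_fps (\<lambda>n. of_nat (card (T i n)))"

definition catalan_gf :: "rat fps" where
  "catalan_gf = Abs_fps (\<lambda>n. of_nat ((2 * n) choose n) / of_nat (n + 1))"

definition D_gf :: "rat fps" where
  "D_gf = fps_X * catalan_gf ^ 2"

end

theory Submission
  imports Defs
begin


lemma gch_rec: "of_nat (Suc k) * (a gchoose Suc k) = (a - of_nat k) * (a gchoose k)"
  for a :: "'a::field_char_0"
proof -
  have "of_nat (Suc k) * (((a - 1) + 1) gchoose Suc k) = ((a-1)+1) * ((a-1) gchoose k)"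
    by (rule Suc_times_gbinomial)
  also have "\<dots> = (a - of_nat k) * (a gchoose k)"
    using gbinomial_absorb_comp[of a k] by simp
  finally show ?thesis by simp
qed

lemma central_rec: "(Suc n) * (Suc n) * ((2*Suc n) choose Suc n) = (2*n+2)*(2*n+1) * ((2*n) choose n)"
proof -
  have 1: "Suc n * (Suc (2*n+1) choose Suc n) = Suc (2*n+1) * ((2*n+1) choose n)"
    by (rule Suc_times_binomial)
  have "((2*n+1) choose n) = ((2*n+1) choose Suc n)"
    using binomial_symmetric[of n "2*n+1"] by simp
  moreover have "Suc n * (Suc (2*n) choose Suc n) = Suc (2*n) * ((2*n) choose n)"
    by (rule Suc_times_binomial)
  ultimately have 2: "Suc n * ((2*n+1) choose n) = (2*n+1) * ((2*n) choose n)" by simp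
  have "2 * Suc n = Suc (2*n+1)" by simp
  hence "(Suc n) * (Suc n) * ((2*Suc n) choose Suc n) = Suc n * (Suc (2*n+1) * ((2*n+1) choose n))"
    using 1 by (metis mult.assoc)
  also have "\<dots> = Suc (2*n+1) * (Suc n * ((2*n+1) choose n))" by simp
  also have "\<dots> = Suc (2*n+1) * ((2*n+1) * ((2*n) choose n))" using 2 by simp
  also have "\<dots> = (2*n+2)*(2*n+1) * ((2*n) choose n)" by (simp only: mult.assoc) simp
  finally show ?thesis .
qed

lemma aux: fixes x b :: rat assumes "x \<ge> 0"
  shows "(-4) * (1/2 - (x+1)) * (-2*b/(x+1)) / (x+2) = -2 * ((2*x+2)*(2*x+1)*b/((x+1)*(x+1))) / (x+1+1)"
proof -
  have a: "x+1 \<noteq> 0" "x+2 \<noteq> 0" using assms by linarith+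
  have e: "(-4) * (1/2 - (x+1)) = (2*(2*x+1)::rat)" by (simp add: algebra_simps)
  have "(-4) * (1/2 - (x+1)) * (-2*b/(x+1)) / (x+2) = 2*(2*x+1) * (-2*b/(x+1)) / (x+2)"
    unfolding e ..
  also have "\<dots> = (2*(2*x+1)*(-2*b)) / ((x+1)*(x+2))"
    by (simp only: times_divide_eq_right divide_divide_eq_left)
  also have "2*(2*x+1)*(-2*b) = (-4*(2*x+1)*b)" by (simp add: algebra_simps)
  also have "(-4*(2*x+1)*b) = (-4*(2*x+1)*b*(x+1))/(x+1)" by (rule nonzero_mult_div_cancel_right[OF a(1), symmetric])
  also have "\<dots> / ((x+1)*(x+2)) = (-4*(2*x+1)*b*(x+1)) / ((x+1)*(x+2)*(x+1))"
    by (simp only: divide_divide_eq_left mult.commute mult.left_commute)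
  also have "\<dots> = -2 * ((2*x+2)*(2*x+1)*b/((x+1)*(x+1))) / (x+1+1)"
  proof -
    have "-2 * ((2*x+2)*(2*x+1)*b/((x+1)*(x+1))) / (x+1+1) = (-2 * ((2*x+2)*(2*x+1)*b)) / ((x+1)*(x+1)*(x+1+1))"
      by (simp only: times_divide_eq_right divide_divide_eq_left)
    also have "-2 * ((2*x+2)*(2*x+1)*b) = (-4*(2*x+1)*b*(x+1))" by (simp add: algebra_simps)
    also have "(x+1)*(x+1)*(x+1+1) = (x+1)*(x+2)*(x+1)" by (simp add: algebra_simps)
    finally show ?thesis ..
  qed
  finally show ?thesis .
qed

lemma coeff_id: "(-4::rat)^(Suc n) * ((1/2) gchoose Suc n) = -2 * of_nat ((2*n) choose n) / of_nat (n+1)"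
proof (induction n)
  case 0 then show ?case by simp
next
  case (Suc n)
  have r: "of_nat (Suc (Suc n)) * ((1/2::rat) gchoose Suc (Suc n)) = (1/2 - of_nat (Suc n)) * ((1/2) gchoose Suc n)"
    by (rule gch_rec)
  define B1 where "B1 = ((2*Suc n) choose Suc n)"
  define B0 where "B0 = ((2*n) choose n)"
  have c: "(Suc n) * (Suc n) * B1 = (2*n+2)*(2*n+1) * B0"
    using central_rec[of n] unfolding B1_def B0_def .
  hence "rat_of_nat ((Suc n) * (Suc n) * B1) = of_nat ((2*n+2)*(2*n+1) * B0)" by (simp only:)
  hence c0: "(of_nat n + 1) * (of_nat n + 1) * rat_of_nat B1 = (2*of_nat n+2)*(2*of_nat n+1) * of_nat B0"
    by (simp add: algebra_simps)
  have c': "rat_of_nat B1 = (2*of_nat n+2)*(2*of_nat n+1) * of_nat B0 / ((of_nat n + 1)*(of_nat n+1))"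
  proof -
    have nz: "(of_nat n + 1::rat) \<noteq> 0" by (metis of_nat_Suc of_nat_neq_0 add.commute)
    hence nz2: "(of_nat n + 1) * (of_nat n + 1) \<noteq> (0::rat)" by simp
    show ?thesis by (rule eq_divide_imp[OF nz2]) (metis c0 mult.commute)
  qed
  have "(-4::rat)^(Suc (Suc n)) * ((1/2) gchoose Suc (Suc n)) = (-4) * ((-4)^(Suc n) * (of_nat (Suc (Suc n)) * ((1/2::rat) gchoose Suc (Suc n)))) / of_nat (Suc (Suc n))"
    by (simp add: field_simps del: of_nat_Suc)
  also have "\<dots> = (-4) * (1/2 - of_nat (Suc n)) * ((-4)^(Suc n) * ((1/2) gchoose Suc n)) / of_nat (Suc (Suc n))"
    unfolding r by (simp add: field_simps del: of_nat_Suc)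
  also have "\<dots> = (-4) * (1/2 - of_nat (Suc n)) * (-2 * of_nat ((2*n) choose n) / of_nat (n+1)) / of_nat (Suc (Suc n))"
    unfolding Suc.IH ..
  also have "\<dots> = -2 * of_nat B1 / of_nat (Suc n + 1)"
  proof -
    have e: "(of_nat (Suc n)::rat) = of_nat n + 1" "(of_nat (n+1)::rat) = of_nat n + 1"
      "(of_nat (Suc (Suc n))::rat) = of_nat n + 2" "(of_nat (Suc n + 1)::rat) = of_nat n + 1 + 1"
      by simp_all
    show ?thesis unfolding e c' B0_def[symmetric] by (rule aux) simp
  qed
  finally show ?case unfolding B1_def .
qed

definition S :: "rat fps" where "S = fps_compose (fps_binomial (1/2)) (fps_const (-4) * fps_X)"

lemma S_sq: "S^2 = 1 - fps_const 4 * fps_X"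
proof -
  have "S^2 = fps_binomial (1/2) ^ 2 oo (fps_const (-4) * fps_X)"
    unfolding S_def by (rule fps_compose_power) simp
  also have "fps_binomial (1/2::rat) ^ 2 = 1 + fps_X"
    by (simp add: fps_binomial_power fps_binomial_1)
  finally show ?thesis
    by (auto simp add: fps_eq_iff fps_compose_linear le_Suc_eq)
qed

lemma S_eq: "S = 1 - fps_const 2 * fps_X * catalan_gf"
proof (subst fps_eq_iff, intro allI)
  fix n show "fps_nth S n = fps_nth (1 - fps_const 2 * fps_X * catalan_gf) n"
  proof (cases n)
    case 0 then show ?thesis by (simp add: S_def)
  next
    case (Suc m)
    have "fps_nth S n = (-4)^(Suc m) * ((1/2) gchoose Suc m)" by (simp add: S_def Suc)
    also have "\<dots> = -2 * of_nat ((2*m) choose m) / of_nat (m+1)" by (rule coeff_id)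
    finally show ?thesis by (simp add: Suc catalan_gf_def mult.assoc)
  qed
qed

lemma cat_eq: "catalan_gf = 1 + fps_X * catalan_gf^2"
proof -
  let ?C = catalan_gf and ?X = "fps_X :: rat fps"
  have "(1 - fps_const 2 * ?X * ?C)^2 = 1 - fps_const 4 * ?X" using S_sq S_eq by simp
  hence "fps_const 4 * ?X * (?X * ?C^2 - ?C + 1) = 0"
    by (simp add: power2_eq_square algebra_simps fps_numeral_fps_const[symmetric])
  hence "?X * ?C^2 - ?C + 1 = 0" by (simp add: fps_numeral_fps_const[symmetric])
  thus ?thesis by (simp add: algebra_simps)
qed

lemma D_eq: "D_gf = fps_X * (1 + D_gf)^2"
proof -
  have "1 + D_gf = catalan_gf" unfolding D_gf_def using cat_eq by simp
  thus ?thesis unfolding D_gf_def by simp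
qed



fun p :: "int \<Rightarrow> nat \<Rightarrow> nat" where
  "p c 0 = (if c = 0 then 1 else 0)"
| "p c (Suc m) = (if c = 0 then 0 else p (c-2) m + 2 * p c m + p (c+2) m)"

definition good :: "int \<Rightarrow> int list \<Rightarrow> int list \<Rightarrow> bool" where
  "good c s1 s2 \<longleftrightarrow> (\<forall>k \<le> length s1. (c + sum_list (take k s2) - sum_list (take k s1) = 0) = (k = length s1))"

definition Q :: "int \<Rightarrow> nat \<Rightarrow> (int list \<times> int list) set" where
  "Q c n = {(s1,s2). s1 \<in> step_lists n \<and> s2 \<in> step_lists n \<and> good c s1 s2}"

lemma all_le_Suc: "(\<forall>k\<le>Suc L. P k) \<longleftrightarrow> P 0 \<and> (\<forall>j\<le>L. P (Suc j))"
  by (metis Suc_le_mono le0 not0_implies_Suc)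

lemma good_Cons: "good c (a#r1) (b#r2) \<longleftrightarrow> c \<noteq> 0 \<and> good (c + b - a) r1 r2"
proof -
  have "good c (a#r1) (b#r2) \<longleftrightarrow> c \<noteq> 0 \<and> (\<forall>j\<le>length r1. (c + (b + sum_list (take j r2)) - (a + sum_list (take j r1)) = 0) = (j = length r1))"
    unfolding good_def by (simp only: length_Cons all_le_Suc) simp
  also have "\<dots> \<longleftrightarrow> c \<noteq> 0 \<and> good (c + b - a) r1 r2"
    unfolding good_def by (intro conj_cong refl all_cong imp_cong) (auto simp: algebra_simps)
  finally show ?thesis .
qed

lemma step_lists_0: "step_lists 0 = {[]}" by (auto simp: step_lists_def)

lemma step_lists_Suc: "s \<in> step_lists (Suc m) \<longleftrightarrow> (\<exists>a r. s = a#r \<and> (a = 1 \<or> a = -1) \<and> r \<in> step_lists m)"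
  by (cases s) (auto simp: step_lists_def)

lemma good_Nil: "good c [] [] \<longleftrightarrow> c = 0" by (simp add: good_def)

lemma Q_0: "Q c 0 = (if c = 0 then {([],[])} else {})"
  by (auto simp: Q_def step_lists_0 good_Nil)

definition cons2 :: "int \<Rightarrow> int \<Rightarrow> int list \<times> int list \<Rightarrow> int list \<times> int list" where
  "cons2 a b = (\<lambda>(r1,r2). (a#r1, b#r2))"

lemma inj_cons2: "inj (cons2 a b)" by (auto simp: inj_def cons2_def)

lemma Q_Suc_0: "Q 0 (Suc m) = {}"
  by (auto simp: Q_def step_lists_Suc good_Cons)

lemma Q_Suc: assumes "c \<noteq> 0"
  shows "Q c (Suc m) = ((cons2 1 1 ` Q c m \<union> cons2 1 (-1) ` Q (c-2) m) \<union> cons2 (-1) 1 ` Q (c+2) m) \<union> cons2 (-1) (-1) ` Q c m"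
proof (intro set_eqI iffI)
  fix x assume "x \<in> Q c (Suc m)"
  then obtain s1 s2 where x: "x = (s1,s2)" and s: "s1 \<in> step_lists (Suc m)" "s2 \<in> step_lists (Suc m)" "good c s1 s2"
    by (auto simp: Q_def)
  then obtain a r1 b r2 where "s1 = a#r1" "s2 = b#r2" "a = 1 \<or> a = -1" "b = 1 \<or> b = -1" "r1 \<in> step_lists m" "r2 \<in> step_lists m"
    by (auto simp: step_lists_Suc)
  with s(3) x show "x \<in> ((cons2 1 1 ` Q c m \<union> cons2 1 (-1) ` Q (c-2) m) \<union> cons2 (-1) 1 ` Q (c+2) m) \<union> cons2 (-1) (-1) ` Q c m"
    by (auto simp: good_Cons Q_def cons2_def image_iff add.commute)
next
  fix x assume "x \<in> ((cons2 1 1 ` Q c m \<union> cons2 1 (-1) ` Q (c-2) m) \<union> cons2 (-1) 1 ` Q (c+2) m) \<union> cons2 (-1) (-1) ` Q c m"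
  then show "x \<in> Q c (Suc m)" using assms
    by (auto simp: good_Cons Q_def cons2_def step_lists_Suc add.commute)
qed

lemma card_Q: "finite (Q c n) \<and> card (Q c n) = p c n"
proof (induction n arbitrary: c)
  case 0 then show ?case by (simp add: Q_0)
next
  case (Suc m)
  show ?case
  proof (cases "c = 0")
    case True then show ?thesis by (simp add: Q_Suc_0)
  next
    case False
    have f: "finite (Q c m)" "finite (Q (c-2) m)" "finite (Q (c+2) m)" using Suc.IH by blast+
    have cd: "card (cons2 a b ` Q d m) = p d m" for a b d
      using Suc.IH card_image[OF inj_on_subset[OF inj_cons2 subset_UNIV]] by metis
    have d1: "cons2 1 1 ` Q c m \<inter> cons2 1 (-1) ` Q (c-2) m = {}" by (auto simp: cons2_def)
    have d2: "(cons2 1 1 ` Q c m \<union> cons2 1 (-1) ` Q (c-2) m) \<inter> cons2 (-1) 1 ` Q (c+2) m = {}" by (auto simp: cons2_def)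
    have d3: "((cons2 1 1 ` Q c m \<union> cons2 1 (-1) ` Q (c-2) m) \<union> cons2 (-1) 1 ` Q (c+2) m) \<inter> cons2 (-1) (-1) ` Q c m = {}" by (auto simp: cons2_def)
    show ?thesis unfolding Q_Suc[OF False] using f
      by (simp add: card_Un_disjoint d1 d2 d3 cd False)
  qed
qed

lemma T_eq_Q: "T i n = Q (2 * int i) n"
proof -
  have "converging (0,0) s1 (0, 2*int i) s2 \<longleftrightarrow> good (2*int i) s1 s2"
    if lens: "length s1 = n" "length s2 = n" for s1 s2
  proof
    assume cv: "converging (0,0) s1 (0, 2*int i) s2"
    show "good (2*int i) s1 s2" unfolding good_def
    proof (intro allI impI)
      fix k assume k: "k \<le> length s1"
      show "(2*int i + sum_list (take k s2) - sum_list (take k s1) = 0) = (k = length s1)"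
      proof
        assume h: "2*int i + sum_list (take k s2) - sum_list (take k s1) = 0"
        have "(int k, sum_list (take k s1)) \<in> walk_points (0,0) s1" using k by (auto simp: walk_points_def)
        moreover have "(int k, sum_list (take k s1)) \<in> walk_points (0,2*int i) s2"
          using k h lens unfolding walk_points_def by (auto intro!: exI[of _ k])
        ultimately have "(int k, sum_list (take k s1)) = walk_end (0,0) s1"
          using cv unfolding converging_def by blast
        thus "k = length s1" by (simp add: walk_end_def)
      next
        assume "k = length s1"
        thus "2*int i + sum_list (take k s2) - sum_list (take k s1) = 0"
          using cv lens unfolding converging_def walk_end_def by simp
      qed
    qed
  next
    assume g: "good (2*int i) s1 s2"
    have e: "walk_end (0,0) s1 = walk_end (0, 2*int i) s2"
      using g lens unfolding good_def walk_end_def by (auto dest: spec[of _ n])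
    have "walk_points (0,0) s1 \<inter> walk_points (0, 2*int i) s2 = {walk_end (0,0) s1}"
    proof (intro equalityI subsetI)
      fix x assume "x \<in> walk_points (0,0) s1 \<inter> walk_points (0, 2*int i) s2"
      hence x1: "x \<in> walk_points (0,0) s1" and x2: "x \<in> walk_points (0, 2*int i) s2" by auto
      obtain k where x01: "x = (int k, sum_list (take k s1))" "k \<le> n"
        using x1 lens unfolding walk_points_def by auto
      obtain k' where x02: "x = (int k', 2*int i + sum_list (take k' s2))" "k' \<le> n"
        using x2 lens unfolding walk_points_def by auto
      note x = x01 x02
      hence "k = k'" by simp
      with x have "2*int i + sum_list (take k s2) - sum_list (take k s1) = 0" by simp
      with g x lens have "k = n" unfolding good_def by auto
      with x01 lens show "x \<in> {walk_end (0,0) s1}" by (simp add: walk_end_def)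
    next
      fix x assume "x \<in> {walk_end (0,0) s1}"
      hence x: "x = walk_end (0,0) s1" by simp
      have "x \<in> walk_points (0,0) s1" unfolding x walk_end_def walk_points_def
        by (auto intro!: exI[of _ "length s1"])
      moreover have "x \<in> walk_points (0, 2*int i) s2"
      proof -
        have "walk_end (0, 2*int i) s2 \<in> walk_points (0, 2*int i) s2" unfolding walk_end_def walk_points_def
          by (auto intro!: exI[of _ "length s2"])
        thus ?thesis using x e by simp
      qed
      ultimately show "x \<in> walk_points (0,0) s1 \<inter> walk_points (0, 2*int i) s2" by blast
    qed
    with e show "converging (0,0) s1 (0, 2*int i) s2" unfolding converging_def by simp
  qed
  thus ?thesis unfolding T_def Q_def step_lists_def by auto
qed


lemma D_pow_rec: "D_gf^(Suc k) = fps_X * (D_gf^k + D_gf^(Suc k) + D_gf^(Suc k) + D_gf^(Suc (Suc k)))"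
proof -
  have "D_gf^(Suc k) = D_gf^k * D_gf" by (simp only: power_Suc2)
  also have "\<dots> = D_gf^k * (fps_X * (1 + D_gf)^2)" using D_eq by simp
  also have "\<dots> = fps_X * (D_gf^k + D_gf^(Suc k) + D_gf^(Suc k) + D_gf^(Suc (Suc k)))"
    by (simp add: power2_eq_square algebra_simps)
  finally show ?thesis .
qed

lemma D0: "fps_nth D_gf 0 = 0" by (simp add: D_gf_def)

lemma coeff_D_pow: "\<forall>j. fps_nth (D_gf^j) n = of_nat (p (2*int j) n)"
proof (induction n)
  case 0
  show ?case
  proof
    fix j show "fps_nth (D_gf^j) 0 = of_nat (p (2*int j) 0)"
      by (cases j) (simp_all add: fps_nth_power_0 D0)
  qed
next
  case (Suc m)
  show ?case
  proof
    fix j show "fps_nth (D_gf^j) (Suc m) = of_nat (p (2*int j) (Suc m))"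
    proof (cases j)
      case 0 then show ?thesis by simp
    next
      case (Suc k)
      have e: "2 * int (Suc k) - 2 = 2 * int k" "2 * int (Suc k) + 2 = 2 * int (Suc (Suc k))" by simp_all
      have "fps_nth (D_gf^j) (Suc m) = fps_nth (D_gf^k) m + fps_nth (D_gf^(Suc k)) m + fps_nth (D_gf^(Suc k)) m + fps_nth (D_gf^(Suc (Suc k))) m"
        unfolding Suc by (subst D_pow_rec) (simp only: fps_X_mult_nth fps_add_nth nat.distinct if_False diff_Suc_1)
      also have "\<dots> = of_nat (p (2*int k) m) + of_nat (p (2*int (Suc k)) m) + of_nat (p (2*int (Suc k)) m) + of_nat (p (2*int (Suc (Suc k))) m)"
        using spec[OF Suc.IH, of k] spec[OF Suc.IH, of "Suc k"] spec[OF Suc.IH, of "Suc (Suc k)"] by (simp only:)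
      also have "\<dots> = of_nat (p (2*int j) (Suc m))"
        unfolding Suc p.simps e by simp
      finally show ?thesis .
    qed
  qed
qed

theorem proposition3p3:
  fixes i :: nat
  assumes "i \<ge> 1"
  shows "T_gf i = D_gf ^ i"
proof (subst fps_eq_iff, intro allI)
  fix n
  have "card (T i n) = p (2 * int i) n" using card_Q T_eq_Q by simp
  thus "fps_nth (T_gf i) n = fps_nth (D_gf ^ i) n"
    using coeff_D_pow[of n] by (simp add: T_gf_def)
qed

end
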